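(* Let $p\ge0$ be an integer, $n=2p+1$ and $R>0$. Let $D$ be the determinant of the $(p+2)\times(p+2)$ matrix whose rows indexed by $i=0,\dots,p$ are $\bigl(\chi_{p+i},\ \delta\chi_{p+i},\ \delta^2\chi_{p+i},\ \dots,\ \delta^p\chi_{p+i},\ 0\bigr)$ and whose last row is $\bigl(-nR^{n-1},0,\dots,0,n!\bigr)$, all functions evaluated at $R$. Then \[D=n!\,R^{(p+1)p/2}\det[\chi_{i+j}(R)]_{i,j=0}^p.\]
   Context: The reverse Bessel polynomials are $\chi_0=1$, $\chi_1=R$, $\chi_{i+2}=R^2\chi_i+(2i+1)\chi_{i+1}$. The operator $\delta$ on functions of $R>0$ is $\delta f(R)=e^{R}R^{2p}\frac{\mathrm d}{\mathrm dR}\bigl(e^{-R}R^{-2p}f(R)\bigr)$, and $\delta^j$ is its $j$-fold iterate. *)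

theory Defs
  imports "HOL-Analysis.Analysis" "Jordan_Normal_Form.Determinant"
begin

text \<open>Reverse Bessel polynomials, as real functions of R.\<close>
fun chi :: "nat \<Rightarrow> real \<Rightarrow> real" where
  "chi 0 R = 1"
| "chi (Suc 0) R = R"
| "chi (Suc (Suc i)) R = R^2 * chi i R + (2 * real i + 1) * chi (Suc i) R"

definition delta :: "nat \<Rightarrow> (real \<Rightarrow> real) \<Rightarrow> real \<Rightarrow> real" where
  "delta p f = (\<lambda>R. exp R * R ^ (2*p) *
      deriv (\<lambda>x. exp (- x) * inverse (x ^ (2*p)) * f x) R)"

end

theory Submission
  imports Defs
begin


definition chid :: "nat \<Rightarrow> real \<Rightarrow> real" where
  "chid k x = (if k = 0 then 0 else (1 + 1/x) * chi k x - x * chi (k - 1) x)"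

lemma chi_deriv:
  assumes "x \<noteq> 0"
  shows "(chi k has_real_derivative chid k x) (at x)"
  using assms
proof (induction k x rule: chi.induct)
  case (1 R) then show ?case
    by (simp add: chid_def)
next
  case (2 R)
  have "chi (Suc 0) = (\<lambda>y. y)" by (rule ext) simp
  then show ?case using 2 by (simp add: chid_def field_simps)
next
  case (3 i R)
  have e: "chi (Suc (Suc i)) = (\<lambda>y. y^2 * chi i y + (2 * real i + 1) * chi (Suc i) y)"
    by (rule ext) simp
  have d: "(chi (Suc (Suc i)) has_real_derivative
      (2 * R * chi i R + R^2 * chid i R + (2 * real i + 1) * chid (Suc i) R)) (at R)"
    unfolding e using 3 by (auto intro!: derivative_eq_intros)
  have eq: "2 * R * chi i R + R^2 * chid i R + (2 * real i + 1) * chid (Suc i) R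
      = chid (Suc (Suc i)) R"
  proof (cases i)
    case 0
    then show ?thesis using 3 by (simp add: chid_def field_simps power2_eq_square)
  next
    case (Suc k)
    have r: "chi (Suc i) R = R^2 * chi k R + (2 * real k + 1) * chi i R"
      using Suc by simp
    show ?thesis using 3 Suc unfolding chid_def
      by (simp add: r field_simps power2_eq_square)
  qed
  from d show ?case by (simp only: eq)
qed

lemma inv_pow_deriv:
  assumes "x \<noteq> 0"
  shows "((\<lambda>y. inverse (y ^ k)) has_real_derivative (- real k / x * inverse (x ^ k))) (at x)"
proof -
  have "((\<lambda>y. inverse (y ^ k)) has_real_derivative
     (- (real k * x ^ (k - 1)) * (inverse (x ^ k) * inverse (x ^ k)))) (at x)"
    using assms by (auto intro!: derivative_eq_intros)
  also have "- (real k * x ^ (k - 1)) * (inverse (x ^ k) * inverse (x ^ k)) = - real k / x * inverse (x ^ k)"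
    using assms by (cases k) (auto simp: field_simps)
  finally show ?thesis .
qed

lemma delta_formula:
  assumes "(f has_real_derivative d) (at x)" and "x \<noteq> 0"
  shows "delta p f x = d - f x - 2 * real p * f x / x"
proof -
  have e: "((\<lambda>y. exp (- y)) has_real_derivative (- exp (- x))) (at x)"
    by (auto intro!: derivative_eq_intros)
  have "((\<lambda>y. exp (- y) * inverse (y ^ (2*p)) * f y) has_real_derivative
     ((- exp (- x)) * inverse (x ^ (2*p)) + (- real (2*p) / x * inverse (x ^ (2*p))) * exp (- x)) * f x
      + d * (exp (- x) * inverse (x ^ (2*p)))) (at x)"
    by (rule DERIV_mult[OF DERIV_mult[OF e inv_pow_deriv[OF assms(2)]] assms(1)])
  then have "deriv (\<lambda>y. exp (- y) * inverse (y ^ (2*p)) * f y) x =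
     ((- exp (- x)) * inverse (x ^ (2*p)) + (- real (2*p) / x * inverse (x ^ (2*p))) * exp (- x)) * f x
      + d * (exp (- x) * inverse (x ^ (2*p)))"
    by (rule DERIV_imp_deriv)
  then show ?thesis using assms(2) unfolding delta_def
    by (simp add: field_simps exp_minus)
qed

lemma powq_deriv:
  assumes "x \<noteq> 0"
  shows "((\<lambda>y. y ^ a / y ^ b) has_real_derivative ((real a - real b) * x ^ a / x ^ Suc b)) (at x)"
proof -
  have "((\<lambda>y. y ^ a / y ^ b) has_real_derivative
     ((real a * x ^ (a - 1) * x ^ b - real b * x ^ (b - 1) * x ^ a) / (x ^ b * x ^ b))) (at x)"
    using assms by (auto intro!: derivative_eq_intros)
  also have "(real a * x ^ (a - 1) * x ^ b - real b * x ^ (b - 1) * x ^ a) / (x ^ b * x ^ b)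
     = (real a - real b) * x ^ a / x ^ Suc b"
    using assms by (cases a; cases b) (auto simp: field_simps)
  finally show ?thesis .
qed

fun cc :: "nat \<Rightarrow> nat \<Rightarrow> nat \<Rightarrow> real" where
  "cc p 0 l = (if l = 0 then 1 else 0)"
| "cc p (Suc j) 0 = (1 - real j - 2 * real p) * cc p j 0"
| "cc p (Suc j) (Suc l) = (2 * real (Suc l) - real j + 1 - 2 * real p) * cc p j (Suc l) - cc p j l"

lemma cc_zero: "j < l \<Longrightarrow> cc p j l = 0"
proof (induction j arbitrary: l)
  case 0 then show ?case by simp
next
  case (Suc j)
  then obtain l' where "l = Suc l'" by (cases l) auto
  with Suc show ?case by simp
qed

lemma cc_diag: "cc p j j = (-1) ^ j"
  by (induction j) (auto simp: cc_zero)

lemma pt_alg: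
  fixes x b a cf c1 c2 rp :: real and l j :: nat
  assumes "x \<noteq> 0" "b \<noteq> 0"
  shows "cf * ((real (2*l) - real j) * a / (x*b) * c1 + a / b * ((1 + 1/x) * c1 - x * c2))
     - cf * (a/b) * c1 - 2*rp*(cf*(a/b)*c1)/x
   = cf * (2 * real l - real j + 1 - 2*rp) * (a / (x*b) * c1) - cf * (a*x*x / (x*b) * c2)"
  using assms by (simp add: field_simps)

lemma delta_iter:
  assumes "j \<le> m" and "x > 0"
  shows "(delta p ^^ j) (chi m) x = (\<Sum>l\<le>j. cc p j l * (x ^ (2*l) / x ^ j) * chi (m - l) x)"
  using assms
proof (induction j arbitrary: x)
  case 0
  then show ?case by simp
next
  case (Suc j)
  define A where "A l = x ^ (2*l) / x ^ Suc j * chi (m - l) x" for l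
  define G where "G y = (\<Sum>l\<le>j. cc p j l * (y ^ (2*l) / y ^ j) * chi (m - l) y)" for y
  define G' where "G' = (\<Sum>l\<le>j. cc p j l * ((real (2*l) - real j) * x ^ (2*l) / x ^ Suc j * chi (m - l) x
                       + x ^ (2*l) / x ^ j * chid (m - l) x))"
  have xn: "x \<noteq> 0" using Suc by simp
  have FG: "(delta p ^^ j) (chi m) y = G y" if "y \<in> {0<..}" for y
    using Suc that unfolding G_def by auto
  have dG: "(G has_real_derivative G') (at x)"
    unfolding G_def G'_def
  proof (intro DERIV_sum)
    fix l
    have "((\<lambda>y. cc p j l * (y ^ (2*l) / y ^ j) * chi (m - l) y) has_real_derivative
       (cc p j l * ((real (2*l) - real j) * x ^ (2*l) / x ^ Suc j)) * chi (m - l) x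
        + chid (m - l) x * (cc p j l * (x ^ (2*l) / x ^ j))) (at x)"
      by (intro DERIV_mult DERIV_cmult powq_deriv chi_deriv xn)
    then show "((\<lambda>y. cc p j l * (y ^ (2*l) / y ^ j) * chi (m - l) y) has_real_derivative
       cc p j l * ((real (2*l) - real j) * x ^ (2*l) / x ^ Suc j * chi (m - l) x
                       + x ^ (2*l) / x ^ j * chid (m - l) x)) (at x)"
      by (simp add: algebra_simps)
  qed
  have dF: "((delta p ^^ j) (chi m) has_real_derivative G') (at x)"
    by (rule has_field_derivative_transform_within_open[OF dG, of "{0<..}"])
       (use Suc FG in auto)
  have "(delta p ^^ Suc j) (chi m) x = delta p ((delta p ^^ j) (chi m)) x" by simp
  also have "\<dots> = G' - G x - 2 * real p * G x / x"
    using delta_formula[OF dF xn] FG[of x] Suc by simp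
  also have "\<dots> = (\<Sum>l\<le>j. cc p j l * (2 * real l - real j + 1 - 2 * real p) * A l)
                 - (\<Sum>l\<le>j. cc p j l * A (Suc l))"
  proof -
    have pt: "cc p j l * ((real (2*l) - real j) * x ^ (2*l) / x ^ Suc j * chi (m - l) x
                       + x ^ (2*l) / x ^ j * chid (m - l) x)
          - cc p j l * (x ^ (2*l) / x ^ j) * chi (m - l) x
          - 2 * real p * (cc p j l * (x ^ (2*l) / x ^ j) * chi (m - l) x) / x
          = cc p j l * (2 * real l - real j + 1 - 2 * real p) * A l - cc p j l * A (Suc l)"
      if "l \<in> {..j}" for l
    proof -
      have lm: "l < m" using that Suc.prems by auto
      obtain k where k: "m - l = Suc k" using lm by (cases "m - l") auto
      have k2: "m - Suc l = k" using k by simp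
      have cd: "chid (m - l) x = (1 + 1/x) * chi (m - l) x - x * chi (m - Suc l) x"
        unfolding chid_def k k2 by simp
      have e1: "x ^ (2 * Suc l) = x ^ (2*l) * x * x" by (simp add: power_add mult.commute mult.left_commute)
      have e2: "x ^ Suc j = x * x ^ j" by simp
      show ?thesis unfolding cd A_def e1 e2
        by (rule pt_alg) (use xn in auto)
    qed
    have "G' - G x - 2 * real p * G x / x =
      (\<Sum>l\<le>j. cc p j l * ((real (2*l) - real j) * x ^ (2*l) / x ^ Suc j * chi (m - l) x
                       + x ^ (2*l) / x ^ j * chid (m - l) x)
          - cc p j l * (x ^ (2*l) / x ^ j) * chi (m - l) x
          - 2 * real p * (cc p j l * (x ^ (2*l) / x ^ j) * chi (m - l) x) / x)"
      unfolding G'_def G_def by (simp add: sum_subtractf sum_distrib_left sum_divide_distrib)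
    also have "\<dots> = (\<Sum>l\<le>j. cc p j l * (2 * real l - real j + 1 - 2 * real p) * A l - cc p j l * A (Suc l))"
      by (rule sum.cong[OF refl pt])
    finally show ?thesis by (simp add: sum_subtractf)
  qed
  also have "\<dots> = (\<Sum>l\<le>Suc j. cc p (Suc j) l * A l)"
  proof -
    have s1: "(\<Sum>l\<le>j. cc p j l * (2 * real l - real j + 1 - 2 * real p) * A l)
        = cc p j 0 * (1 - real j - 2 * real p) * A 0
          + (\<Sum>l\<le>j. cc p j (Suc l) * (2 * real (Suc l) - real j + 1 - 2 * real p) * A (Suc l))"
    proof -
      have "(\<Sum>l\<le>j. cc p j l * (2 * real l - real j + 1 - 2 * real p) * A l)
          = (\<Sum>l\<le>Suc j. cc p j l * (2 * real l - real j + 1 - 2 * real p) * A l)"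
        by (simp add: cc_zero)
      also have "\<dots> = cc p j 0 * (1 - real j - 2 * real p) * A 0
          + (\<Sum>l\<le>j. cc p j (Suc l) * (2 * real (Suc l) - real j + 1 - 2 * real p) * A (Suc l))"
        by (subst sum.atMost_Suc_shift) simp
      finally show ?thesis .
    qed
    have s2: "(\<Sum>l\<le>Suc j. cc p (Suc j) l * A l) = cc p (Suc j) 0 * A 0
          + (\<Sum>l\<le>j. cc p (Suc j) (Suc l) * A (Suc l))"
      by (subst sum.atMost_Suc_shift) simp
    have s3: "(\<Sum>l\<le>j. cc p (Suc j) (Suc l) * A (Suc l)) =
       (\<Sum>l\<le>j. cc p j (Suc l) * (2 * real (Suc l) - real j + 1 - 2 * real p) * A (Suc l))
       - (\<Sum>l\<le>j. cc p j l * A (Suc l))"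
      unfolding sum_subtractf[symmetric] by (rule sum.cong) (simp_all add: algebra_simps)
    show ?thesis unfolding s1 s2 s3 by (simp add: algebra_simps)
  qed
  also have "\<dots> = (\<Sum>l\<le>Suc j. cc p (Suc j) l * (x ^ (2*l) / x ^ Suc j) * chi (m - l) x)"
    unfolding A_def by (simp add: mult.assoc)
  finally show ?case .
qed



lemma det_antidiag:
  "det (mat n n (\<lambda>(i,j). if i + j = n - 1 then (1::real) else 0)) = (\<Prod>k<n. (-1)^k)"
proof (induction n)
  case 0
  then show ?case by (simp add: det_dim_zero)
next
  case (Suc n)
  let ?A = "mat (Suc n) (Suc n) (\<lambda>(i,j). if i + j = Suc n - 1 then (1::real) else 0)"
  have A: "?A \<in> carrier_mat (Suc n) (Suc n)" by simp
  have "det ?A = (\<Sum>i<Suc n. ?A $$ (i,0) * cofactor ?A i 0)"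
    by (rule laplace_expansion_column[OF A]) simp
  also have "\<dots> = ?A $$ (n,0) * cofactor ?A n 0"
    by (subst sum.lessThan_Suc) (auto intro!: sum.neutral)
  also have "mat_delete ?A n 0 = mat n n (\<lambda>(i,j). if i + j = n - 1 then (1::real) else 0)"
    by (rule eq_matI) (auto simp: mat_delete_def)
  then have "cofactor ?A n 0 = (-1)^n * (\<Prod>k<n. (-1)^k)"
    unfolding cofactor_def using Suc.IH by simp
  finally show ?case by simp
qed



lemma M_factor:
  fixes p :: nat and R :: real
  assumes R: "R > 0"
  defines "N \<equiv> Suc p"
  shows "det (mat N N (\<lambda>(i,j). (delta p ^^ j) (chi (p+i)) R))
       = R ^ ((p+1)*p div 2) * det (mat N N (\<lambda>(i,j). chi (i+j) R))"
proof -
  define H where "H = mat N N (\<lambda>(i,j). chi (i+j) R)"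
  define J where "J = mat N N (\<lambda>(i,j). if i + j = N - 1 then (1::real) else 0)"
  define A where "A = mat N N (\<lambda>(i,l). chi (i + p - l) R)"
  define B where "B = mat N N (\<lambda>(l,j). if l \<le> j then cc p j l * (R ^ (2*l) / R ^ j) else 0)"
  have HJ: "H * J = A"
  proof (rule eq_matI)
    fix i l assume i: "i < dim_row A" and l: "l < dim_col A"
    have "(H * J) $$ (i,l) = (\<Sum>k<N. chi (i+k) R * (if k + l = N - 1 then 1 else 0))"
      using i l unfolding H_def J_def A_def
      by (simp add: scalar_prod_def atLeast0LessThan)
    also have "\<dots> = (\<Sum>k\<in>{p - l}. chi (i+k) R)"
      using l unfolding A_def N_def
      by (intro sum.mono_neutral_cong_right) auto
    also have "\<dots> = A $$ (i,l)" using i l unfolding A_def N_def by simp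
    finally show "(H * J) $$ (i,l) = A $$ (i,l)" .
  qed (auto simp: H_def J_def A_def)
  have AB: "A * B = mat N N (\<lambda>(i,j). (delta p ^^ j) (chi (p+i)) R)"
  proof (rule eq_matI)
    fix i j assume i: "i < dim_row (mat N N (\<lambda>(i,j). (delta p ^^ j) (chi (p+i)) R))"
      and j: "j < dim_col (mat N N (\<lambda>(i,j). (delta p ^^ j) (chi (p+i)) R))"
    have jp: "j \<le> p" using j unfolding N_def by simp
    have "(A * B) $$ (i,j) = (\<Sum>l<N. chi (i + p - l) R * (if l \<le> j then cc p j l * (R ^ (2*l) / R ^ j) else 0))"
      using i j unfolding A_def B_def
      by (simp add: scalar_prod_def atLeast0LessThan)
    also have "\<dots> = (\<Sum>l\<le>j. chi (i + p - l) R * (cc p j l * (R ^ (2*l) / R ^ j)))"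
      using jp unfolding N_def
      by (intro sum.mono_neutral_cong_right) auto
    also have "\<dots> = (\<Sum>l\<le>j. cc p j l * (R ^ (2*l) / R ^ j) * chi (p + i - l) R)"
      by (simp add: algebra_simps)
    also have "\<dots> = (delta p ^^ j) (chi (p+i)) R"
      using delta_iter[of j "p+i" R p] jp R by simp
    finally show "(A * B) $$ (i,j) = mat N N (\<lambda>(i,j). (delta p ^^ j) (chi (p+i)) R) $$ (i,j)"
      using i j by simp
  qed (auto simp: A_def B_def)
  have cH: "H \<in> carrier_mat N N" and cJ: "J \<in> carrier_mat N N" and cA: "A \<in> carrier_mat N N"
    and cB: "B \<in> carrier_mat N N" by (auto simp: H_def J_def A_def B_def)
  have dJ: "det J = (\<Prod>k<N. (-1)^k)" unfolding J_def by (rule det_antidiag)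
  have dB: "det B = (\<Prod>k<N. (-1)^k * R ^ k)"
  proof -
    have "det B = prod_list (diag_mat B)"
      by (rule det_upper_triangular[OF _ cB]) (auto simp: B_def)
    also have "\<dots> = (\<Prod>k<N. B $$ (k,k))"
      by (simp add: prod_list_diag_prod B_def atLeast0LessThan)
    also have "\<dots> = (\<Prod>k<N. (-1)^k * R ^ k)"
      using R by (intro prod.cong) (auto simp: B_def cc_diag power_mult_distrib mult_2 power_add)
    finally show ?thesis .
  qed
  have "det (mat N N (\<lambda>(i,j). (delta p ^^ j) (chi (p+i)) R)) = det H * (det J * det B)"
    unfolding AB[symmetric] HJ[symmetric]
    using cH cJ cB by (simp add: det_mult[of _ N] mult.assoc)
  also have "det J * det B = (\<Prod>k<N. R ^ k)"
    unfolding dJ dB prod.distrib[symmetric] by (intro prod.cong) (auto simp: power_mult_distrib[symmetric] mult.assoc[symmetric] power_add[symmetric] simp del: power_mult_distrib)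
  also have "\<dots> = R ^ (\<Sum>k<N. k)" by (simp add: power_sum)
  also have "(\<Sum>k<N. k) = (p+1)*p div 2"
    unfolding N_def using gauss_sum_nat[of p] by (simp add: atLeast0AtMost lessThan_Suc_atMost mult.commute)
  finally show ?thesis unfolding H_def by simp
qed

theorem lemma5p2:
  fixes p :: nat and n :: nat and R :: real
  assumes "n = 2*p + 1" and "R > 0"
  shows "det (mat (p+2) (p+2) (\<lambda>(i,j).
            if i \<le> p then (if j \<le> p then (delta p ^^ j) (chi (p+i)) R else 0)
            else (if j = 0 then - real n * R ^ (n-1)
                  else if j = p+1 then fact n else 0)))
       = fact n * R ^ ((p+1)*p div 2) * det (mat (p+1) (p+1) (\<lambda>(i,j). chi (i+j) R))"
proof -
  let ?G = "mat (p+2) (p+2) (\<lambda>(i,j).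
            if i \<le> p then (if j \<le> p then (delta p ^^ j) (chi (p+i)) R else 0)
            else (if j = 0 then - real n * R ^ (n-1)
                  else if j = p+1 then fact n else (0::real)))"
  have cG: "?G \<in> carrier_mat (p+2) (p+2)" by simp
  have "det ?G = (\<Sum>i<p+2. ?G $$ (i,p+1) * cofactor ?G i (p+1))"
    by (rule laplace_expansion_column[OF cG]) simp
  also have "\<dots> = ?G $$ (p+1,p+1) * cofactor ?G (p+1) (p+1)"
  proof -
    have e: "{..<p+2} = insert (p+1) {..<p+1}" by auto
    have z: "(\<Sum>i<p+1. ?G $$ (i,p+1) * cofactor ?G i (p+1)) = 0"
      by (intro sum.neutral) auto
    show ?thesis unfolding e by (subst sum.insert) (use z in auto)
  qed
  also have "mat_delete ?G (p+1) (p+1) = mat (Suc p) (Suc p) (\<lambda>(i,j). (delta p ^^ j) (chi (p+i)) R)"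
    by (rule eq_matI) (auto simp: mat_delete_def)
  then have "cofactor ?G (p+1) (p+1) = R ^ ((p+1)*p div 2) * det (mat (p+1) (p+1) (\<lambda>(i,j). chi (i+j) R))"
    unfolding cofactor_def using M_factor[OF assms(2), of p] by simp
  finally show ?thesis by simp
qed

end
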